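(* Let $m\geq 2$, $d\ge1$, $s>0$, and let $j$ be a nonnegative integer. Let $\mathfrak{m}$ be a measurable function on $\mathbb{R}^{md}$ such that $|\mathfrak{m}(\xi)|\le C(1+|\xi|)^{-s}$ for all $\xi$ and $\mathrm{supp}(\mathfrak{m})\subset\mathbb{A}^{md}(2^j)$. For Schwartz functions $f_1,\dots,f_m$ on $\mathbb{R}^d$ and $\mathrm{F}=(f_1,\dots,f_m)$ define \[ T_{\mathfrak{m}}(\mathrm{F})(x)=\int_{\mathbb{R}^{md}} e^{2\pi i x\cdot(\xi_1+\cdots+\xi_m)}\,\mathfrak{m}(\xi)\prod_{i=1}^m\widehat{f_i}(\xi_i)\,\mathrm{d}\xi,\qquad x\in\mathbb{R}^d,\ \xi=(\xi_1,\dots,\xi_m). \] Then, with a constant $C'$ independent of $j$ and of the $f_i$, \[ \|T_{\mathfrak{m}}(\mathrm{F})\|_{L^2(\mathbb{R}^d)}\le C'\,2^{-j\left(s-\frac{(m-1)d}{2}\right)}\prod_{i=1}^m\|f_i\|_{L^2(\mathbb{R}^d)}. \]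
   Context: $\mathbb{A}^n(\lambda)=\{x\in\mathbb{R}^n:\lambda/2<|x|<2\lambda\}$ denotes the annulus in $\mathbb{R}^n$. *)

theory Defs
  imports "HOL-Analysis.Analysis"
begin

definition annulus :: "real \<Rightarrow> 'a::real_normed_vector set" where
  "annulus lam = {x. lam / 2 < norm x \<and> norm x < 2 * lam}"

definition dirderiv :: "('a::real_normed_vector \<Rightarrow> complex) \<Rightarrow> 'a \<Rightarrow> 'a \<Rightarrow> complex" where
  "dirderiv f v x = vector_derivative (\<lambda>t::real. f (x + t *\<^sub>R v)) (at 0)"

fun partials :: "'n list \<Rightarrow> (real^'n \<Rightarrow> complex) \<Rightarrow> real^'n \<Rightarrow> complex" where
  "partials [] f = f"
| "partials (i # is) f = dirderiv (partials is f) (axis i 1)"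

definition schwartz :: "(real^'n \<Rightarrow> complex) \<Rightarrow> bool" where
  "schwartz f \<longleftrightarrow>
     (\<forall>is x. partials is f differentiable (at x)) \<and>
     (\<forall>is (N::nat). \<exists>C. \<forall>x. (1 + norm x) ^ N * cmod (partials is f x) \<le> C)"

definition fourier :: "(real^'n \<Rightarrow> complex) \<Rightarrow> real^'n \<Rightarrow> complex" where
  "fourier f \<xi> = (\<integral>x. f x * exp (- (2 * pi * \<i> * complex_of_real (x \<bullet> \<xi>))) \<partial>lebesgue)"

definition l2norm :: "('a::euclidean_space \<Rightarrow> complex) \<Rightarrow> real" where
  "l2norm g = sqrt (\<integral>x. (cmod (g x))\<^sup>2 \<partial>lebesgue)"

text \<open>Multilinear multiplier operator; xi :: real^'n^'k is (xi_1,...,xi_m), m = CARD('k).\<close>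
definition multop :: "(real^'n^'k \<Rightarrow> complex) \<Rightarrow> ('k \<Rightarrow> real^'n \<Rightarrow> complex) \<Rightarrow> real^'n \<Rightarrow> complex" where
  "multop \<mm> F x = (\<integral>\<xi>. exp (2 * pi * \<i> * complex_of_real (x \<bullet> (\<Sum>i\<in>UNIV. \<xi> $ i)))
        * \<mm> \<xi> * (\<Prod>i\<in>UNIV. fourier (F i) (\<xi> $ i)) \<partial>lebesgue)"

end

theory Submission
  imports Defs "HOL-Probability.Probability"
begin

lemma borel_measurable_vec_lambda_PiM[measurable]:
  "(\<lambda>f. vec_lambda f :: 'a::euclidean_space ^ 'k) \<in> borel_measurable (PiM UNIV (\<lambda>_::'k. (lborel :: 'a measure)))"
proof (subst borel_measurable_euclidean_space, intro ballI)
  fix b :: "'a ^ 'k" assume "b \<in> Basis"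
  then obtain i u where b: "b = axis i u" and u: "u \<in> Basis" by (auto simp: Basis_vec_def)
  have "(\<lambda>f. vec_lambda f \<bullet> b) = (\<lambda>f. f i \<bullet> u)" by (auto simp: b inner_axis)
  then show "(\<lambda>f. vec_lambda f \<bullet> b) \<in> borel_measurable (PiM UNIV (\<lambda>_::'k. (lborel :: 'a measure)))"
    by simp
qed

lemma box_vec: "box (l :: 'a::euclidean_space ^ 'k) u = {x. \<forall>i. x $ i \<in> box (l $ i) (u $ i)}"
  by (auto simp: box_def Basis_vec_def inner_axis)

lemma lborel_vec: "(lborel :: ('a::euclidean_space ^ 'k) measure) = distr (PiM UNIV (\<lambda>_::'k. (lborel :: 'a measure))) borel vec_lambda"
proof (rule lborel_eqI)
  interpret product_sigma_finite "\<lambda>_::'k. (lborel :: 'a measure)" by standard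
  fix l u :: "'a ^ 'k" assume le: "\<And>b. b \<in> Basis \<Longrightarrow> l \<bullet> b \<le> u \<bullet> b"
  have leI: "\<And>i b. b \<in> Basis \<Longrightarrow> l $ i \<bullet> b \<le> u $ i \<bullet> b"
  proof -
    fix i :: 'k and b :: 'a assume "b \<in> Basis"
    then have "axis i b \<in> Basis" by (auto simp: Basis_vec_def)
    from le[OF this] show "l $ i \<bullet> b \<le> u $ i \<bullet> b" by (simp add: inner_axis)
  qed
  have pre: "vec_lambda -` box l u \<inter> space (PiM UNIV (\<lambda>_::'k. (lborel :: 'a measure))) = PiE UNIV (\<lambda>i. box (l $ i) (u $ i))"
    by (auto simp: box_vec space_PiM)
  have "emeasure (distr (PiM UNIV (\<lambda>_::'k. (lborel :: 'a measure))) borel vec_lambda) (box l u)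
     = emeasure (PiM UNIV (\<lambda>_::'k. (lborel :: 'a measure))) (PiE UNIV (\<lambda>i. box (l $ i) (u $ i)))"
    by (subst emeasure_distr) (auto simp: pre)
  also have "\<dots> = (\<Prod>i\<in>UNIV. emeasure lborel (box (l $ i) (u $ i)))"
    by (rule emeasure_PiM) auto
  also have "\<dots> = (\<Prod>i\<in>UNIV. ennreal (\<Prod>b\<in>Basis. (u $ i - l $ i) \<bullet> b))"
  proof (rule prod.cong[OF refl])
    fix i
    from leI show "emeasure lborel (box (l $ i) (u $ i)) = ennreal (\<Prod>b\<in>Basis. (u $ i - l $ i) \<bullet> b)"
      by (subst emeasure_lborel_box_eq) (auto simp: inner_diff_left)
  qed
  also have "\<dots> = ennreal (\<Prod>i\<in>UNIV. \<Prod>b\<in>Basis. (u $ i - l $ i) \<bullet> b)"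
    using leI by (subst prod_ennreal) (auto intro!: prod_nonneg simp: inner_diff_left)
  also have "(\<Prod>i\<in>UNIV. \<Prod>b\<in>Basis. (u $ i - l $ i) \<bullet> b) = (\<Prod>b\<in>Basis. (u - l) \<bullet> b)"
  proof -
    have "(\<Prod>b\<in>(Basis :: ('a^'k) set). (u - l) \<bullet> b) = (\<Prod>i\<in>UNIV. \<Prod>b\<in>(\<lambda>v. axis i v) ` Basis. (u - l) \<bullet> b)"
      unfolding Basis_vec_def
      by (subst prod.UNION_disjoint) (auto simp: axis_eq_axis Setcompr_eq_image[symmetric] UNION_singleton_eq_range intro!: prod.cong)
    also have "\<dots> = (\<Prod>i\<in>UNIV. \<Prod>b\<in>Basis. (u $ i - l $ i) \<bullet> b)"
      by (subst prod.reindex) (auto simp: inj_on_def axis_eq_axis inner_axis)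
    finally show ?thesis by simp
  qed
  finally show "emeasure (distr (PiM UNIV (\<lambda>_::'k. (lborel :: 'a measure))) borel vec_lambda) (box l u) = (\<Prod>b\<in>Basis. (u - l) \<bullet> b)" .
qed simp

definition gs :: "real \<Rightarrow> real \<Rightarrow> real" where "gs e t = exp (- pi * e * t\<^sup>2)"
definition kr :: "real \<Rightarrow> real \<Rightarrow> real" where "kr e a = exp (- pi * a\<^sup>2 / e) / sqrt e"

lemma kr_normal: "e > 0 \<Longrightarrow> kr e a = normal_density 0 (sqrt (e / (2*pi))) a"
  by (simp add: kr_def normal_density_def real_sqrt_divide field_simps)

lemma gs_kr: "e > 0 \<Longrightarrow> gs e t = kr (1/e) t / sqrt e"
  by (simp add: kr_def gs_def real_sqrt_divide field_simps)

lemma measurable_gs[measurable]: "gs e \<in> borel_measurable borel"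
  unfolding gs_def[abs_def] by measurable
lemma measurable_kr[measurable]: "kr e \<in> borel_measurable borel"
  unfolding kr_def[abs_def] by measurable

lemma kr_nonneg: "e > 0 \<Longrightarrow> kr e a \<ge> 0" by (simp add: kr_def)
lemma gs_nonneg: "gs e a \<ge> 0" by (simp add: gs_def)

lemma nn_integral_kr: "e > 0 \<Longrightarrow> (\<integral>\<^sup>+ a. ennreal (kr e a) \<partial>lborel) = 1"
proof -
  assume e: "e > 0"
  interpret prob_space "density lborel (normal_density 0 (sqrt (e / (2*pi))))"
    using e by (intro prob_space_normal_density) auto
  have "emeasure (density lborel (normal_density 0 (sqrt (e / (2*pi))))) UNIV = 1"
    using emeasure_space_1 by simp
  then show ?thesis using e
    by (simp add: kr_normal emeasure_density)
qed

lemma integrable_kr: "e > 0 \<Longrightarrow> integrable lborel (kr e)"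
  using nn_integral_kr[of e] kr_nonneg[of e]
  by (intro integrableI_nonneg) auto

lemma integrable_gs: "e > 0 \<Longrightarrow> integrable lborel (gs e)"
proof -
  assume e: "e > 0"
  have "integrable lborel (\<lambda>t. kr (1/e) t / sqrt e)"
    using integrable_kr[of "1/e"] e by (intro integrable_divide_zero) auto
  moreover have "gs e = (\<lambda>t. kr (1/e) t / sqrt e)" using e by (simp add: gs_kr fun_eq_iff)
  ultimately show ?thesis by simp
qed

lemma gs_fourier:
  assumes e: "e > 0"
  shows "(\<integral>t. complex_of_real (gs e t) * exp (\<i> * complex_of_real (2*pi*b*t)) \<partial>lborel) = complex_of_real (kr e b)"
proof -
  define c where "c = sqrt (2*pi*e)"
  define u where "u = 2*pi*b/c"
  have c: "c > 0" using e by (simp add: c_def)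
  have "complex_of_real (exp (- (u^2) / 2)) = char std_normal_distribution u"
    by (simp add: char_std_normal_distribution)
  also have "\<dots> = (\<integral>x. std_normal_density x *\<^sub>R iexp (u * x) \<partial>lborel)"
    unfolding char_def by (subst integral_density) auto
  also have "\<dots> = \<bar>c\<bar> *\<^sub>R (\<integral>t. std_normal_density (0 + c * t) *\<^sub>R iexp (u * (0 + c * t)) \<partial>lborel)"
    using c by (intro lborel_integral_real_affine) simp
  also have "\<dots> = (\<integral>t. complex_of_real (c / sqrt (2*pi)) * (complex_of_real (gs e t) * exp (\<i> * complex_of_real (2*pi*b*t))) \<partial>lborel)"
  proof -
    have "\<And>t. std_normal_density (c * t) = gs e t / sqrt (2*pi)"
      using e by (simp add: std_normal_density_def gs_def c_def power_mult_distrib field_simps)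
    moreover have "\<And>t. iexp (u * (0 + c * t)) = exp (\<i> * complex_of_real (2*pi*b*t))"
    proof -
      fix t have "u * (0 + c * t) = 2*pi*b*t" using c by (simp add: u_def)
      then show "iexp (u * (0 + c * t)) = exp (\<i> * complex_of_real (2*pi*b*t))" by metis
    qed
    ultimately have "\<And>t. std_normal_density (0 + c * t) *\<^sub>R iexp (u * (0 + c * t))
        = complex_of_real (1 / sqrt (2*pi)) * (complex_of_real (gs e t) * exp (\<i> * complex_of_real (2*pi*b*t)))"
      by (simp only: scaleR_conv_of_real add_0_left) simp
    then have "(\<integral>t. std_normal_density (0 + c * t) *\<^sub>R iexp (u * (0 + c * t)) \<partial>lborel)
       = complex_of_real (1 / sqrt (2*pi)) * (\<integral>t. complex_of_real (gs e t) * exp (\<i> * complex_of_real (2*pi*b*t)) \<partial>lborel)"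
      by simp
    then show ?thesis using c
      by (simp add: scaleR_conv_of_real)
  qed
  also have "\<dots> = complex_of_real (c / sqrt (2*pi)) * (\<integral>t. complex_of_real (gs e t) * exp (\<i> * complex_of_real (2*pi*b*t)) \<partial>lborel)"
    by simp
  finally have eq: "complex_of_real (exp (- (u^2) / 2)) = complex_of_real (c / sqrt (2*pi)) * (\<integral>t. complex_of_real (gs e t) * exp (\<i> * complex_of_real (2*pi*b*t)) \<partial>lborel)" .
  have cs: "c / sqrt (2*pi) = sqrt e" using e by (simp add: c_def real_sqrt_mult)
  have ue: "- (u^2) / 2 = - pi * b\<^sup>2 / e" using e c
    by (simp add: u_def c_def power_divide power_mult_distrib field_simps power2_eq_square)
  define I where "I = (\<integral>t. complex_of_real (gs e t) * exp (\<i> * complex_of_real (2*pi*b*t)) \<partial>lborel)"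
  have "complex_of_real (sqrt e) * I = complex_of_real (exp (- pi * b\<^sup>2 / e))"
    using eq unfolding I_def cs ue by simp
  then have "I = complex_of_real (exp (- pi * b\<^sup>2 / e)) / complex_of_real (sqrt e)"
    using e by (simp add: field_simps)
  then show ?thesis unfolding I_def by (simp add: kr_def)
qed

lemma measurable_vec_nth[measurable]: "(\<lambda>x::'a::euclidean_space^'n. x $ i) \<in> borel_measurable borel"
  by (intro borel_measurable_continuous_onI linear_continuous_on bounded_linear_vec_nth)

definition G :: "real \<Rightarrow> real^'n \<Rightarrow> real" where "G e x = (\<Prod>k\<in>UNIV. gs e (x$k))"
definition K :: "real \<Rightarrow> real^'n \<Rightarrow> real" where "K e a = (\<Prod>k\<in>UNIV. kr e (a$k))"

lemma measurable_G[measurable]: "G e \<in> borel_measurable borel"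
  unfolding G_def[abs_def] by measurable
lemma measurable_K[measurable]: "K e \<in> borel_measurable borel"
  unfolding K_def[abs_def] by measurable

lemma G_nonneg: "G e x \<ge> 0" by (simp add: G_def gs_nonneg prod_nonneg)
lemma K_nonneg: "e > 0 \<Longrightarrow> K e x \<ge> 0" by (simp add: K_def kr_nonneg prod_nonneg)
lemma K_even: "K e (- a) = K e a" by (simp add: K_def kr_def)

lemma inner_vec_real: "(x::real^'n) \<bullet> c = (\<Sum>k\<in>UNIV. x$k * c$k)"
  by (simp add: inner_vec_def)

lemma G_fourier:
  assumes e: "e > 0"
  shows "(\<integral>x. complex_of_real (G e x) * exp (\<i> * complex_of_real (2*pi*(x \<bullet> c))) \<partial>lborel) = complex_of_real (K e (c::real^'n))"
proof -
  interpret P: product_sigma_finite "\<lambda>_::'n. (lborel :: real measure)" by standard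
  have "(\<integral>x. complex_of_real (G e x) * exp (\<i> * complex_of_real (2*pi*(x \<bullet> c))) \<partial>lborel)
    = (\<integral>f. complex_of_real (G e (vec_lambda f)) * exp (\<i> * complex_of_real (2*pi*(vec_lambda f \<bullet> c))) \<partial>PiM UNIV (\<lambda>_. lborel))"
    by (subst lborel_vec) (simp add: integral_distr)
  also have "\<dots> = (\<integral>f. (\<Prod>k\<in>UNIV. complex_of_real (gs e (f k)) * exp (\<i> * complex_of_real (2*pi*(c$k)*(f k)))) \<partial>PiM UNIV (\<lambda>_. lborel))"
  proof (rule Bochner_Integration.integral_cong[OF refl])
    fix f :: "'n \<Rightarrow> real"
    have "exp (\<i> * complex_of_real (2*pi*(vec_lambda f \<bullet> c))) = exp (\<Sum>k\<in>UNIV. \<i> * complex_of_real (2*pi*(c$k)*(f k)))"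
      by (simp add: inner_vec_real sum_distrib_left mult_ac)
    also have "\<dots> = (\<Prod>k\<in>UNIV. exp (\<i> * complex_of_real (2*pi*(c$k)*(f k))))"
      by (simp add: exp_sum)
    finally show "complex_of_real (G e (vec_lambda f)) * exp (\<i> * complex_of_real (2*pi*(vec_lambda f \<bullet> c)))
       = (\<Prod>k\<in>UNIV. complex_of_real (gs e (f k)) * exp (\<i> * complex_of_real (2*pi*(c$k)*(f k))))"
      by (simp add: G_def prod.distrib)
  qed
  also have "\<dots> = (\<Prod>k\<in>UNIV. (\<integral>t. complex_of_real (gs e t) * exp (\<i> * complex_of_real (2*pi*(c$k)*t)) \<partial>lborel))"
  proof (rule P.product_integral_prod)
    fix k :: 'n
    show "integrable lborel (\<lambda>t. complex_of_real (gs e t) * exp (\<i> * complex_of_real (2*pi*(c$k)*t)))"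
    proof (rule Bochner_Integration.integrable_bound[where f="\<lambda>t. complex_of_real (gs e t)"])
      show "integrable lborel (\<lambda>t. complex_of_real (gs e t))"
        using integrable_gs[OF e] by (rule integrable_of_real)
      show "AE t in lborel. norm (complex_of_real (gs e t) * exp (\<i> * complex_of_real (2*pi*(c$k)*t))) \<le> norm (complex_of_real (gs e t))"
        by (simp add: norm_mult)
    qed measurable
  qed simp
  also have "\<dots> = (\<Prod>k\<in>UNIV. complex_of_real (kr e (c$k)))"
    using gs_fourier[OF e] by simp
  finally show ?thesis by (simp add: K_def)
qed

lemma nn_integral_G: "e > 0 \<Longrightarrow> (\<integral>\<^sup>+ x. ennreal (G e (x::real^'n)) \<partial>lborel) = (\<Prod>k\<in>(UNIV::'n set). \<integral>\<^sup>+ t. ennreal (gs e t) \<partial>lborel)"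
proof -
  interpret P: product_sigma_finite "\<lambda>_::'n. (lborel :: real measure)" by standard
  have "(\<integral>\<^sup>+ x. ennreal (G e (x::real^'n)) \<partial>lborel) = (\<integral>\<^sup>+ f. (\<Prod>k\<in>UNIV. ennreal (gs e (f k))) \<partial>PiM UNIV (\<lambda>_::'n. lborel))"
    by (subst lborel_vec) (simp add: nn_integral_distr G_def prod_ennreal gs_nonneg)
  also have "\<dots> = (\<Prod>k\<in>(UNIV::'n set). \<integral>\<^sup>+ t. ennreal (gs e t) \<partial>lborel)"
    by (rule P.product_nn_integral_prod) auto
  finally show ?thesis .
qed

lemma integrable_G: "e > 0 \<Longrightarrow> integrable lborel (G e :: real^'n \<Rightarrow> real)"
proof -
  assume e: "e > 0"
  have "(\<integral>\<^sup>+ t. ennreal (gs e t) \<partial>lborel) < \<infinity>"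
    using integrable_gs[OF e] gs_nonneg by (simp add: integrable_iff_bounded)
  then have "(\<integral>\<^sup>+ x. ennreal (G e (x::real^'n)) \<partial>lborel) < \<infinity>"
    using e by (simp add: nn_integral_G ennreal_prod_eq_top less_top power_less_top_ennreal)
  then show ?thesis using G_nonneg by (intro integrableI_nonneg) auto
qed

lemma nn_integral_K: "e > 0 \<Longrightarrow> (\<integral>\<^sup>+ x. ennreal (K e (x::real^'n)) \<partial>lborel) = 1"
proof -
  assume e: "e > 0"
  interpret P: product_sigma_finite "\<lambda>_::'n. (lborel :: real measure)" by standard
  have "(\<integral>\<^sup>+ x. ennreal (K e (x::real^'n)) \<partial>lborel) = (\<integral>\<^sup>+ f. (\<Prod>k\<in>UNIV. ennreal (kr e (f k))) \<partial>PiM UNIV (\<lambda>_::'n. lborel))"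
    using e by (subst lborel_vec) (simp add: nn_integral_distr K_def prod_ennreal kr_nonneg)
  also have "\<dots> = (\<Prod>k\<in>(UNIV::'n set). \<integral>\<^sup>+ t. ennreal (kr e t) \<partial>lborel)"
    by (rule P.product_nn_integral_prod) auto
  also have "\<dots> = 1" using e by (simp add: nn_integral_kr)
  finally show ?thesis .
qed

lemma nn_integral_K_shift: "e > 0 \<Longrightarrow> (\<integral>\<^sup>+ y. ennreal (K e (a - (y::real^'n))) \<partial>lborel) = 1"
proof -
  assume e: "e > 0"
  have L: "(lborel :: (real^'n) measure) = density (distr lborel borel (\<lambda>x. a + (-1) *\<^sub>R x)) (\<lambda>_. 1)"
    using lborel_affine[of "-1::real" a] by simp
  have "(\<integral>\<^sup>+ y. ennreal (K e (y::real^'n)) \<partial>lborel) = (\<integral>\<^sup>+ y. ennreal (K e (y::real^'n)) \<partial>density (distr lborel borel (\<lambda>x. a + (-1) *\<^sub>R x)) (\<lambda>_. 1))"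
    by (rule arg_cong[where f="\<lambda>M. \<integral>\<^sup>+ y. ennreal (K e (y::real^'n)) \<partial>M", OF L])
  also have "\<dots> = (\<integral>\<^sup>+ y. ennreal (K e (a - (y::real^'n))) \<partial>lborel)"
    by (simp add: density_1 nn_integral_distr)
  finally show ?thesis using nn_integral_K[OF e] by metis
qed

lemma gs_mono: "e \<le> e' \<Longrightarrow> gs e' t \<le> gs e t"
  by (simp add: gs_def mult_right_mono)

lemma G_le_1: "e \<ge> 0 \<Longrightarrow> G e x \<le> 1"
  unfolding G_def by (rule prod_le_1) (auto simp: gs_def gs_nonneg mult_nonneg_nonneg)

lemma G_mono: "e \<le> e' \<Longrightarrow> G e' x \<le> G e x"
  unfolding G_def by (intro prod_mono) (auto simp: gs_nonneg gs_mono)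

lemma G_lim: "(\<lambda>n. G (1 / Suc n) x) \<longlonglongrightarrow> 1"
proof -
  have "(\<lambda>n. G (1 / Suc n) x) \<longlonglongrightarrow> (\<Prod>k\<in>UNIV. exp (- pi * 0 * (x$k)\<^sup>2))"
    unfolding G_def gs_def
    using LIMSEQ_inverse_real_of_nat by (intro tendsto_intros) (simp add: inverse_eq_divide)
  then show ?thesis by simp
qed

lemma reg_limit:
  fixes h :: "real^'n \<Rightarrow> ennreal"
  assumes [measurable]: "h \<in> borel_measurable borel"
    and bnd: "\<And>e. e > 0 \<Longrightarrow> (\<integral>\<^sup>+ x. ennreal (G e x) * h x \<partial>lborel) \<le> B"
  shows "(\<integral>\<^sup>+ x. h x \<partial>lborel) \<le> B"
proof -
  define f where "f n x = ennreal (G (1 / Suc n) x) * h x" for n x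
  have inc: "incseq f"
    unfolding f_def incseq_def le_fun_def
    by (auto intro!: mult_left_mono mult_right_mono ennreal_leI G_mono simp: field_simps)
  have sup: "(SUP n. f n x) = h x" for x
  proof -
    have "incseq (\<lambda>n. ennreal (G (1 / Suc n) x))"
      unfolding incseq_def by (auto intro!: ennreal_leI G_mono simp: field_simps)
    then have "(\<lambda>n. ennreal (G (1 / Suc n) x)) \<longlonglongrightarrow> (SUP n. ennreal (G (1 / Suc n) x))"
      by (rule LIMSEQ_SUP)
    moreover have "(\<lambda>n. ennreal (G (1 / Suc n) x)) \<longlonglongrightarrow> ennreal 1"
      by (intro tendsto_ennrealI G_lim)
    ultimately have "(SUP n. ennreal (G (1 / Suc n) x)) = 1"
      using LIMSEQ_unique by fastforce
    then show ?thesis unfolding f_def by (simp add: SUP_mult_right_ennreal[symmetric])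
  qed
  have "(\<integral>\<^sup>+ x. h x \<partial>lborel) = (\<integral>\<^sup>+ x. (SUP n. f n x) \<partial>lborel)" by (simp add: sup)
  also have "\<dots> = (SUP n. integral\<^sup>N lborel (f n))"
    by (rule nn_integral_monotone_convergence_SUP[OF inc]) (unfold f_def, measurable)
  also have "\<dots> \<le> B"
    by (rule SUP_least) (unfold f_def, rule bnd, simp)
  finally show ?thesis .
qed

lemma borel_measurable_cnj[measurable (raw)]:
  "f \<in> borel_measurable M \<Longrightarrow> (\<lambda>x. cnj (f x)) \<in> borel_measurable M"
  by (erule measurable_compose) (intro borel_measurable_continuous_onI linear_continuous_on bounded_linear_cnj)

lemma (in pair_sigma_finite) integrable_prod_mult:
  fixes f :: "'a \<Rightarrow> 'c::{real_normed_field, banach, second_countable_topology}" and g :: "'b \<Rightarrow> 'c"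
  assumes f: "integrable M1 f" and g: "integrable M2 g"
  shows "integrable (M1 \<Otimes>\<^sub>M M2) (\<lambda>z. f (fst z) * g (snd z))"
proof (rule integrableI_bounded)
  have [measurable]: "f \<in> borel_measurable M1" "g \<in> borel_measurable M2" using f g by auto
  show "(\<lambda>z. f (fst z) * g (snd z)) \<in> borel_measurable (M1 \<Otimes>\<^sub>M M2)" by measurable
  have "(\<integral>\<^sup>+ z. ennreal (norm (f (fst z) * g (snd z))) \<partial>(M1 \<Otimes>\<^sub>M M2))
      = (\<integral>\<^sup>+ x. \<integral>\<^sup>+ y. ennreal (norm (f x)) * ennreal (norm (g y)) \<partial>M2 \<partial>M1)"
    by (subst M2.nn_integral_fst[symmetric]) (auto simp: norm_mult ennreal_mult)
  also have "\<dots> = (\<integral>\<^sup>+ x. ennreal (norm (f x)) * (\<integral>\<^sup>+ y. ennreal (norm (g y)) \<partial>M2) \<partial>M1)"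
    by (simp add: nn_integral_cmult)
  also have "\<dots> = (\<integral>\<^sup>+ x. ennreal (norm (f x)) \<partial>M1) * (\<integral>\<^sup>+ y. ennreal (norm (g y)) \<partial>M2)"
    by (simp add: nn_integral_multc)
  also have "\<dots> < \<infinity>" using f g by (simp add: integrable_iff_bounded ennreal_mult_less_top)
  finally show "(\<integral>\<^sup>+ z. ennreal (norm (f (fst z) * g (snd z))) \<partial>(M1 \<Otimes>\<^sub>M M2)) < \<infinity>" .
qed

lemma (in pair_sigma_finite) integral_prod_mult:
  fixes f :: "'a \<Rightarrow> 'c::{real_normed_field, banach, second_countable_topology}" and g :: "'b \<Rightarrow> 'c"
  assumes f: "integrable M1 f" and g: "integrable M2 g"
  shows "(\<integral>z. f (fst z) * g (snd z) \<partial>(M1 \<Otimes>\<^sub>M M2)) = (\<integral>x. f x \<partial>M1) * (\<integral>y. g y \<partial>M2)"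
proof -
  have "(\<integral>z. f (fst z) * g (snd z) \<partial>(M1 \<Otimes>\<^sub>M M2)) = (\<integral>x. \<integral>y. f x * g y \<partial>M2 \<partial>M1)"
    using integral_fst'[OF integrable_prod_mult[OF f g]] by simp
  also have "\<dots> = (\<integral>x. f x * (\<integral>y. g y \<partial>M2) \<partial>M1)" by simp
  also have "\<dots> = (\<integral>x. f x \<partial>M1) * (\<integral>y. g y \<partial>M2)" by simp
  finally show ?thesis .
qed

lemma exp_cnj_mult:
  "exp (\<i> * complex_of_real a) * cnj (exp (\<i> * complex_of_real b)) = exp (\<i> * complex_of_real (a - b))"
proof -
  have "cnj (exp (\<i> * complex_of_real b)) = exp (- (\<i> * complex_of_real b))" by (simp add: exp_cnj)
  then show ?thesis by (simp add: exp_add[symmetric] algebra_simps)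
qed

lemma core:
  fixes M :: "'e measure" and \<psi> :: "'e \<Rightarrow> complex" and S :: "'e \<Rightarrow> real^'n"
  assumes sf: "sigma_finite_measure M" and int: "integrable M \<psi>" and S[measurable]: "S \<in> M \<rightarrow>\<^sub>M borel"
    and e: "e > 0"
  shows "(\<integral>\<^sup>+x. ennreal (G e x * (cmod (\<integral>\<xi>. exp (\<i> * complex_of_real (2*pi*(x \<bullet> S \<xi>))) * \<psi> \<xi> \<partial>M))\<^sup>2) \<partial>lborel)
     \<le> (\<integral>\<^sup>+z. ennreal (cmod (\<psi> (fst z)) * cmod (\<psi> (snd z)) * K e (S (fst z) - S (snd z))) \<partial>(M \<Otimes>\<^sub>M M))"
proof -
  interpret M: sigma_finite_measure M by fact
  interpret MM: pair_sigma_finite M M by (simp add: pair_sigma_finite_def sf)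
  interpret LQ: pair_sigma_finite lborel "M \<Otimes>\<^sub>M M"
    by (simp add: pair_sigma_finite_def MM.P.sigma_finite_measure_axioms lborel.sigma_finite_measure_axioms)
  have [measurable]: "\<psi> \<in> borel_measurable M" using int by auto
  define ea where "ea x \<xi> = exp (\<i> * complex_of_real (2*pi*(x \<bullet> S \<xi>)))" for x \<xi>
  define T where "T x = (\<integral>\<xi>. ea x \<xi> * \<psi> \<xi> \<partial>M)" for x
  define \<Phi> where "\<Phi> x z = complex_of_real (G e x) * (ea x (fst z) * \<psi> (fst z) * cnj (ea x (snd z) * \<psi> (snd z)))" for x z
  have [measurable]: "(\<lambda>p. ea (fst p) (snd p)) \<in> borel_measurable (lborel \<Otimes>\<^sub>M M)"
    unfolding ea_def by measurable
  have Tm[measurable]: "T \<in> borel_measurable lborel"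
    unfolding T_def by (rule M.borel_measurable_lebesgue_integral) (simp add: split_beta')
  have nea[simp]: "norm (ea x \<xi>) = 1" for x \<xi> unfolding ea_def by simp
  have int_ea: "integrable M (\<lambda>\<xi>. ea x \<xi> * \<psi> \<xi>)" for x
  proof (rule Bochner_Integration.integrable_bound[OF int])
    have [measurable]: "(\<lambda>\<xi>. ea x \<xi>) \<in> borel_measurable M" unfolding ea_def by measurable
    show "(\<lambda>\<xi>. ea x \<xi> * \<psi> \<xi>) \<in> borel_measurable M" by measurable
  qed (simp add: norm_mult)
  define B1 where "B1 = (\<integral>\<xi>. norm (\<psi> \<xi>) \<partial>M)"
  have Tb: "norm (T x) \<le> B1" for x
  proof -
    have "norm (T x) \<le> (\<integral>\<xi>. norm (ea x \<xi> * \<psi> \<xi>) \<partial>M)" unfolding T_def by (rule integral_norm_bound)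
    then show ?thesis by (simp add: norm_mult B1_def)
  qed
  have B1pos: "B1 \<ge> 0" unfolding B1_def by simp
  have sq: "complex_of_real ((cmod (T x))\<^sup>2) = (\<integral>z. ea x (fst z) * \<psi> (fst z) * cnj (ea x (snd z) * \<psi> (snd z)) \<partial>(M \<Otimes>\<^sub>M M))" for x
  proof -
    have "complex_of_real ((cmod (T x))\<^sup>2) = T x * cnj (T x)" by (rule complex_norm_square)
    also have "\<dots> = (\<integral>\<xi>. ea x \<xi> * \<psi> \<xi> \<partial>M) * (\<integral>\<xi>. cnj (ea x \<xi> * \<psi> \<xi>) \<partial>M)"
      unfolding T_def by (simp only: Bochner_Integration.integral_cnj)
    also have "\<dots> = (\<integral>z. ea x (fst z) * \<psi> (fst z) * cnj (ea x (snd z) * \<psi> (snd z)) \<partial>(M \<Otimes>\<^sub>M M))"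
      by (rule MM.integral_prod_mult[symmetric, OF int_ea]) (rule integrable_cnj[OF int_ea])
    finally show ?thesis .
  qed
  have intQ: "integrable (M \<Otimes>\<^sub>M M) (\<lambda>z. \<psi> (fst z) * cnj (\<psi> (snd z)))"
    by (rule MM.integrable_prod_mult[OF int]) (simp add: int)
  have intLQ: "integrable (lborel \<Otimes>\<^sub>M (M \<Otimes>\<^sub>M M)) (\<lambda>p. complex_of_real (G e (fst p)) * (\<psi> (fst (snd p)) * cnj (\<psi> (snd (snd p)))))"
    using LQ.integrable_prod_mult[OF integrable_of_real[OF integrable_G[OF e]] intQ] by simp
  have intPhi: "integrable (lborel \<Otimes>\<^sub>M (M \<Otimes>\<^sub>M M)) (\<lambda>p. \<Phi> (fst p) (snd p))"
  proof (rule Bochner_Integration.integrable_bound[OF intLQ])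
    have [measurable]: "(\<lambda>p. ea (fst p) (fst (snd p))) \<in> borel_measurable (lborel \<Otimes>\<^sub>M (M \<Otimes>\<^sub>M M))"
      "(\<lambda>p. ea (fst p) (snd (snd p))) \<in> borel_measurable (lborel \<Otimes>\<^sub>M (M \<Otimes>\<^sub>M M))"
      unfolding ea_def by measurable
    show "(\<lambda>p. \<Phi> (fst p) (snd p)) \<in> borel_measurable (lborel \<Otimes>\<^sub>M (M \<Otimes>\<^sub>M M))"
      unfolding \<Phi>_def by measurable
  qed (simp add: \<Phi>_def norm_mult)
  have inner: "(\<integral>x. \<Phi> x z \<partial>lborel) = \<psi> (fst z) * cnj (\<psi> (snd z)) * complex_of_real (K e (S (fst z) - S (snd z)))" for z
  proof -
    have "\<And>x. \<Phi> x z = \<psi> (fst z) * cnj (\<psi> (snd z)) * (complex_of_real (G e x) * exp (\<i> * complex_of_real (2*pi*(x \<bullet> (S (fst z) - S (snd z))))))"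
    proof -
      fix x
      have "ea x (fst z) * cnj (ea x (snd z)) = exp (\<i> * complex_of_real (2*pi*(x \<bullet> (S (fst z) - S (snd z)))))"
        unfolding ea_def exp_cnj_mult by (simp add: inner_diff_right algebra_simps)
      then show "\<Phi> x z = \<psi> (fst z) * cnj (\<psi> (snd z)) * (complex_of_real (G e x) * exp (\<i> * complex_of_real (2*pi*(x \<bullet> (S (fst z) - S (snd z))))))"
        unfolding \<Phi>_def by (simp add: mult_ac)
    qed
    then have "(\<integral>x. \<Phi> x z \<partial>lborel) = (\<integral>x. \<psi> (fst z) * cnj (\<psi> (snd z)) * (complex_of_real (G e x) * exp (\<i> * complex_of_real (2*pi*(x \<bullet> (S (fst z) - S (snd z)))))) \<partial>lborel)"
      by (simp only:)
    also have "\<dots> = \<psi> (fst z) * cnj (\<psi> (snd z)) * (\<integral>x. complex_of_real (G e x) * exp (\<i> * complex_of_real (2*pi*(x \<bullet> (S (fst z) - S (snd z))))) \<partial>lborel)"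
      by (rule integral_mult_right_zero)
    also have "\<dots> = \<psi> (fst z) * cnj (\<psi> (snd z)) * complex_of_real (K e (S (fst z) - S (snd z)))"
      by (simp only: G_fourier[OF e])
    finally show ?thesis .
  qed
  have "complex_of_real (\<integral>x. G e x * (cmod (T x))\<^sup>2 \<partial>lborel) = (\<integral>x. complex_of_real (G e x * (cmod (T x))\<^sup>2) \<partial>lborel)"
    by (simp only: integral_complex_of_real)
  also have "\<dots> = (\<integral>x. \<integral>z. \<Phi> x z \<partial>(M \<Otimes>\<^sub>M M) \<partial>lborel)"
  proof (rule Bochner_Integration.integral_cong[OF refl])
    fix x
    have "complex_of_real (G e x * (cmod (T x))\<^sup>2) = complex_of_real (G e x) * complex_of_real ((cmod (T x))\<^sup>2)" by simp
    also have "\<dots> = (\<integral>z. \<Phi> x z \<partial>(M \<Otimes>\<^sub>M M))" unfolding sq \<Phi>_def by simp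
    finally show "complex_of_real (G e x * (cmod (T x))\<^sup>2) = (\<integral>z. \<Phi> x z \<partial>(M \<Otimes>\<^sub>M M))" .
  qed
  also have "\<dots> = (\<integral>z. \<integral>x. \<Phi> x z \<partial>lborel \<partial>(M \<Otimes>\<^sub>M M))"
    using LQ.Fubini_integral[of \<Phi>] intPhi by (simp add: split_beta')
  also have "\<dots> = (\<integral>z. \<psi> (fst z) * cnj (\<psi> (snd z)) * complex_of_real (K e (S (fst z) - S (snd z))) \<partial>(M \<Otimes>\<^sub>M M))"
    by (simp add: inner)
  finally have eqc: "complex_of_real (\<integral>x. G e x * (cmod (T x))\<^sup>2 \<partial>lborel) = (\<integral>z. \<psi> (fst z) * cnj (\<psi> (snd z)) * complex_of_real (K e (S (fst z) - S (snd z))) \<partial>(M \<Otimes>\<^sub>M M))" .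
  define h where "h z = cmod (\<psi> (fst z)) * cmod (\<psi> (snd z)) * K e (S (fst z) - S (snd z))" for z
  have [measurable]: "h \<in> borel_measurable (M \<Otimes>\<^sub>M M)" unfolding h_def by measurable
  have hpos: "h z \<ge> 0" for z unfolding h_def by (intro mult_nonneg_nonneg norm_ge_zero K_nonneg[OF e])
  have le1: "(\<integral>x. G e x * (cmod (T x))\<^sup>2 \<partial>lborel) \<le> (\<integral>z. h z \<partial>(M \<Otimes>\<^sub>M M))"
  proof -
    have "(\<integral>x. G e x * (cmod (T x))\<^sup>2 \<partial>lborel) \<le> norm (complex_of_real (\<integral>x. G e x * (cmod (T x))\<^sup>2 \<partial>lborel))"
      by simp
    also have "\<dots> \<le> (\<integral>z. norm (\<psi> (fst z) * cnj (\<psi> (snd z)) * complex_of_real (K e (S (fst z) - S (snd z)))) \<partial>(M \<Otimes>\<^sub>M M))"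
      unfolding eqc by (rule integral_norm_bound)
    also have "\<dots> = (\<integral>z. h z \<partial>(M \<Otimes>\<^sub>M M))"
      by (simp add: h_def norm_mult abs_of_nonneg[OF K_nonneg[OF e]])
    finally show ?thesis .
  qed
  have intGT: "integrable lborel (\<lambda>x. G e x * (cmod (T x))\<^sup>2)"
  proof (rule Bochner_Integration.integrable_bound[OF integrable_mult_right[OF integrable_G[OF e], of "B1\<^sup>2"]])
    show "(\<lambda>x. G e x * (cmod (T x))\<^sup>2) \<in> borel_measurable lborel" by measurable
    show "AE x in lborel. norm (G e x * (cmod (T x))\<^sup>2) \<le> norm (B1\<^sup>2 * G e x)"
    proof (rule AE_I2)
      fix x
      have "(cmod (T x))\<^sup>2 \<le> B1\<^sup>2" using Tb[of x] by (simp add: power_mono)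
      then show "norm (G e x * (cmod (T x))\<^sup>2) \<le> norm (B1\<^sup>2 * G e x)"
        using G_nonneg[of e x] by (simp add: abs_mult mult.commute mult_left_mono)
    qed
  qed
  have "(\<integral>\<^sup>+x. ennreal (G e x * (cmod (T x))\<^sup>2) \<partial>lborel) = ennreal (\<integral>x. G e x * (cmod (T x))\<^sup>2 \<partial>lborel)"
    using intGT by (intro nn_integral_eq_integral) (auto intro!: mult_nonneg_nonneg G_nonneg)
  also have "\<dots> \<le> ennreal (\<integral>z. h z \<partial>(M \<Otimes>\<^sub>M M))" using le1 by (rule ennreal_leI)
  also have "\<dots> \<le> (\<integral>\<^sup>+z. ennreal (h z) \<partial>(M \<Otimes>\<^sub>M M))"
  proof (cases "integrable (M \<Otimes>\<^sub>M M) h")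
    case True then show ?thesis using hpos by (subst nn_integral_eq_integral) auto
  next
    case False then show ?thesis by (simp add: not_integrable_integral_eq)
  qed
  finally show ?thesis unfolding T_def ea_def h_def .
qed

lemma split_bound:
  fixes M :: "'e measure" and p q :: "'e \<Rightarrow> real" and W g :: "'e \<Rightarrow> 'e \<Rightarrow> real" and A :: ennreal
  assumes sf: "sigma_finite_measure M"
    and [measurable]: "p \<in> borel_measurable M" "q \<in> borel_measurable M"
    and Wm[measurable]: "(\<lambda>z. W (fst z) (snd z)) \<in> borel_measurable (M \<Otimes>\<^sub>M M)"
    and gm[measurable]: "(\<lambda>z. g (fst z) (snd z)) \<in> borel_measurable (M \<Otimes>\<^sub>M M)"
    and pos: "\<And>a. p a \<ge> 0" "\<And>a. q a \<ge> 0" "\<And>a b. W a b \<ge> 0" "\<And>a b. g a b \<ge> 0"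
    and sym: "\<And>a b. W a b = W b a"
    and gle: "\<And>a b. g a b \<le> p a * q b / 2 + q a * p b / 2"
    and Ab: "\<And>a. (\<integral>\<^sup>+ b. ennreal (q b * W a b) \<partial>M) \<le> A"
  shows "(\<integral>\<^sup>+ z. ennreal (g (fst z) (snd z) * W (fst z) (snd z)) \<partial>(M \<Otimes>\<^sub>M M)) \<le> A * (\<integral>\<^sup>+ a. ennreal (p a) \<partial>M)"
proof -
  interpret M: sigma_finite_measure M by fact
  interpret MM: pair_sigma_finite M M by (simp add: pair_sigma_finite_def sf)
  have [measurable]: "(\<lambda>z. W (snd z) (fst z)) \<in> borel_measurable (M \<Otimes>\<^sub>M M)"
    using Wm by (simp add: sym)
  have Wx: "(\<lambda>b. ennreal (q b * W a b)) \<in> borel_measurable M" if "a \<in> space M" for a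
  proof -
    have [measurable]: "(\<lambda>b. W a b) \<in> borel_measurable M"
      using measurable_Pair2[OF Wm that] by simp
    show ?thesis by measurable
  qed
  have "(\<integral>\<^sup>+ z. ennreal (g (fst z) (snd z) * W (fst z) (snd z)) \<partial>(M \<Otimes>\<^sub>M M))
     \<le> (\<integral>\<^sup>+ z. ennreal (1/2) * ennreal (p (fst z)) * ennreal (q (snd z) * W (fst z) (snd z))
              + ennreal (1/2) * ennreal (p (snd z)) * ennreal (q (fst z) * W (snd z) (fst z)) \<partial>(M \<Otimes>\<^sub>M M))"
  proof (rule nn_integral_mono)
    fix z
    have "g (fst z) (snd z) * W (fst z) (snd z) \<le> (p (fst z) * q (snd z) / 2 + q (fst z) * p (snd z) / 2) * W (fst z) (snd z)"
      using gle pos by (intro mult_right_mono) auto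
    also have "\<dots> = 1/2 * p (fst z) * (q (snd z) * W (fst z) (snd z)) + 1/2 * p (snd z) * (q (fst z) * W (snd z) (fst z))"
      by (simp add: sym[of "fst z"] algebra_simps)
    finally have le: "g (fst z) (snd z) * W (fst z) (snd z) \<le> 1/2 * p (fst z) * (q (snd z) * W (fst z) (snd z)) + 1/2 * p (snd z) * (q (fst z) * W (snd z) (fst z))" .
    have n1: "0 \<le> 1/2 * p (fst z) * (q (snd z) * W (fst z) (snd z))" using pos by (intro mult_nonneg_nonneg) auto
    have n2: "0 \<le> 1/2 * p (snd z) * (q (fst z) * W (snd z) (fst z))" using pos by (intro mult_nonneg_nonneg) auto
    have "ennreal (g (fst z) (snd z) * W (fst z) (snd z)) \<le> ennreal (1/2 * p (fst z) * (q (snd z) * W (fst z) (snd z)) + 1/2 * p (snd z) * (q (fst z) * W (snd z) (fst z)))"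
      using le by (rule ennreal_leI)
    also have "\<dots> = ennreal (1/2 * p (fst z) * (q (snd z) * W (fst z) (snd z))) + ennreal (1/2 * p (snd z) * (q (fst z) * W (snd z) (fst z)))"
      using n1 n2 by (rule ennreal_plus)
    also have "ennreal (1/2 * p (fst z) * (q (snd z) * W (fst z) (snd z))) = ennreal (1/2 * p (fst z)) * ennreal (q (snd z) * W (fst z) (snd z))"
      using pos by (intro ennreal_mult mult_nonneg_nonneg) auto
    also have "ennreal (1/2 * p (fst z)) = ennreal (1/2) * ennreal (p (fst z))"
      using pos by (intro ennreal_mult) auto
    also have "ennreal (1/2 * p (snd z) * (q (fst z) * W (snd z) (fst z))) = ennreal (1/2 * p (snd z)) * ennreal (q (fst z) * W (snd z) (fst z))"
      using pos by (intro ennreal_mult mult_nonneg_nonneg) auto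
    also have "ennreal (1/2 * p (snd z)) = ennreal (1/2) * ennreal (p (snd z))"
      using pos by (intro ennreal_mult) auto
    finally show "ennreal (g (fst z) (snd z) * W (fst z) (snd z)) \<le> ennreal (1/2) * ennreal (p (fst z)) * ennreal (q (snd z) * W (fst z) (snd z))
              + ennreal (1/2) * ennreal (p (snd z)) * ennreal (q (fst z) * W (snd z) (fst z))" .
  qed
  also have "\<dots> = (\<integral>\<^sup>+ z. ennreal (1/2) * ennreal (p (fst z)) * ennreal (q (snd z) * W (fst z) (snd z)) \<partial>(M \<Otimes>\<^sub>M M))
      + (\<integral>\<^sup>+ z. ennreal (1/2) * ennreal (p (snd z)) * ennreal (q (fst z) * W (snd z) (fst z)) \<partial>(M \<Otimes>\<^sub>M M))"
    by (rule nn_integral_add) auto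
  also have "(\<integral>\<^sup>+ z. ennreal (1/2) * ennreal (p (fst z)) * ennreal (q (snd z) * W (fst z) (snd z)) \<partial>(M \<Otimes>\<^sub>M M))
      = (\<integral>\<^sup>+ a. ennreal (1/2) * ennreal (p a) * (\<integral>\<^sup>+ b. ennreal (q b * W a b) \<partial>M) \<partial>M)"
    by (subst M.nn_integral_fst[symmetric]) (auto intro!: nn_integral_cong nn_integral_cmult simp: Wx)
  also have "(\<integral>\<^sup>+ z. ennreal (1/2) * ennreal (p (snd z)) * ennreal (q (fst z) * W (snd z) (fst z)) \<partial>(M \<Otimes>\<^sub>M M))
      = (\<integral>\<^sup>+ a. ennreal (1/2) * ennreal (p a) * (\<integral>\<^sup>+ b. ennreal (q b * W a b) \<partial>M) \<partial>M)"
    by (subst MM.nn_integral_snd[symmetric]) (auto intro!: nn_integral_cong nn_integral_cmult simp: Wx)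
  also have "(\<integral>\<^sup>+ a. ennreal (1/2) * ennreal (p a) * (\<integral>\<^sup>+ b. ennreal (q b * W a b) \<partial>M) \<partial>M)
      \<le> (\<integral>\<^sup>+ a. ennreal (1/2) * ennreal (p a) * A \<partial>M)"
    by (intro nn_integral_mono mult_left_mono Ab) auto
  also have "(\<integral>\<^sup>+ a. ennreal (1/2) * ennreal (p a) * A \<partial>M) = ennreal (1/2) * A * (\<integral>\<^sup>+ a. ennreal (p a) \<partial>M)"
    by (simp add: nn_integral_cmult nn_integral_multc mult_ac)
  also have "ennreal (1/2) * A * (\<integral>\<^sup>+ a. ennreal (p a) \<partial>M) + ennreal (1/2) * A * (\<integral>\<^sup>+ a. ennreal (p a) \<partial>M)
     = (ennreal (1/2) + ennreal (1/2)) * (A * (\<integral>\<^sup>+ a. ennreal (p a) \<partial>M))"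
    by (simp add: distrib_left distrib_right mult_ac)
  also have "ennreal (1/2) + ennreal (1/2) = 1"
  proof -
    have "ennreal (1/2) + ennreal (1/2) = ennreal (1/2 + 1/2)" by (rule ennreal_plus[symmetric]) auto
    then show ?thesis by simp
  qed
  finally show ?thesis by (simp add: add_mono)
qed

lemma fourier_alt:
  fixes f :: "real^'n \<Rightarrow> complex"
  assumes [measurable]: "f \<in> borel_measurable borel"
  shows "fourier f \<xi> = (\<integral>x. exp (\<i> * complex_of_real (2*pi*(\<xi> \<bullet> (- x)))) * f x \<partial>lborel)"
proof -
  have "fourier f \<xi> = (\<integral>x. f x * exp (- (2 * pi * \<i> * complex_of_real (x \<bullet> \<xi>))) \<partial>lborel)"
    unfolding fourier_def by (rule integral_completion) measurable
  also have "\<dots> = (\<integral>x. exp (\<i> * complex_of_real (2*pi*(\<xi> \<bullet> (- x)))) * f x \<partial>lborel)"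
    by (rule Bochner_Integration.integral_cong) (auto simp: inner_commute mult_ac)
  finally show ?thesis .
qed

lemma measurable_fourier[measurable]:
  fixes f :: "real^'n \<Rightarrow> complex"
  assumes [measurable]: "f \<in> borel_measurable borel"
  shows "fourier f \<in> borel_measurable borel"
proof -
  have "(\<lambda>\<xi>. \<integral>x. exp (\<i> * complex_of_real (2*pi*(\<xi> \<bullet> (- x)))) * f x \<partial>lborel) \<in> borel_measurable lborel"
    by (rule lborel.borel_measurable_lebesgue_integral) (simp add: split_beta')
  moreover have "fourier f = (\<lambda>\<xi>. \<integral>x. exp (\<i> * complex_of_real (2*pi*(\<xi> \<bullet> (- x)))) * f x \<partial>lborel)"
    by (rule ext) (rule fourier_alt[OF assms(1)])
  ultimately show ?thesis by simp
qed

lemma plancherel_le: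
  fixes f :: "real^'n \<Rightarrow> complex"
  assumes fm[measurable]: "f \<in> borel_measurable borel" and fi: "integrable lborel f"
  shows "(\<integral>\<^sup>+\<xi>. ennreal ((cmod (fourier f \<xi>))\<^sup>2) \<partial>lborel) \<le> (\<integral>\<^sup>+x. ennreal ((cmod (f x))\<^sup>2) \<partial>lborel)"
proof (rule reg_limit)
  show "(\<lambda>\<xi>. ennreal ((cmod (fourier f \<xi>))\<^sup>2)) \<in> borel_measurable borel" by measurable
  fix e :: real assume e: "e > 0"
  have "(\<integral>\<^sup>+\<xi>. ennreal (G e \<xi>) * ennreal ((cmod (fourier f \<xi>))\<^sup>2) \<partial>lborel)
     = (\<integral>\<^sup>+\<xi>. ennreal (G e \<xi> * (cmod (\<integral>x. exp (\<i> * complex_of_real (2*pi*(\<xi> \<bullet> (- x)))) * f x \<partial>lborel))\<^sup>2) \<partial>lborel)"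
    by (simp add: fourier_alt[OF fm] ennreal_mult'[symmetric] G_nonneg)
  also have "\<dots> \<le> (\<integral>\<^sup>+z. ennreal (cmod (f (fst z)) * cmod (f (snd z)) * K e (- fst z - - snd z)) \<partial>(lborel \<Otimes>\<^sub>M lborel))"
    by (rule core[OF lborel.sigma_finite_measure_axioms fi _ e]) simp
  also have "\<dots> \<le> 1 * (\<integral>\<^sup>+x. ennreal ((cmod (f x))\<^sup>2) \<partial>lborel)"
  proof (rule split_bound[OF lborel.sigma_finite_measure_axioms, where q="\<lambda>_. 1" and W="\<lambda>a b. K e (- a - - b)"])
    show "(\<lambda>z. K e (- fst z - - snd z)) \<in> borel_measurable (lborel \<Otimes>\<^sub>M lborel)" by measurable
    show "\<And>a b. K e (- a - - b) = K e (- b - - a)"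
      by (metis K_even minus_diff_eq)
    show "\<And>a b. K e (- a - - b) \<ge> 0" using K_nonneg[OF e] by blast
    show "\<And>a b. cmod (f a) * cmod (f b) \<le> (cmod (f a))\<^sup>2 * 1 / 2 + 1 * (cmod (f b))\<^sup>2 / 2"
    proof -
      fix a b
      have "0 \<le> (cmod (f a) - cmod (f b))\<^sup>2" by simp
      then show "cmod (f a) * cmod (f b) \<le> (cmod (f a))\<^sup>2 * 1 / 2 + 1 * (cmod (f b))\<^sup>2 / 2"
        by (simp add: power2_eq_square algebra_simps)
    qed
    fix a :: "real^'n"
    have "(\<integral>\<^sup>+ b. ennreal (1 * K e (- a - - b)) \<partial>lborel) = (\<integral>\<^sup>+ b. ennreal (K e (a - b)) \<partial>lborel)"
      by (rule nn_integral_cong) (metis K_even minus_diff_eq mult_1 diff_minus_eq_add uminus_add_conv_diff)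
    also have "\<dots> = 1" using nn_integral_K_shift[OF e] .
    finally show "(\<integral>\<^sup>+ b. ennreal (1 * K e (- a - - b)) \<partial>lborel) \<le> 1" by simp
  qed auto
  finally show "(\<integral>\<^sup>+\<xi>. ennreal (G e \<xi>) * ennreal ((cmod (fourier f \<xi>))\<^sup>2) \<partial>lborel) \<le> (\<integral>\<^sup>+x. ennreal ((cmod (f x))\<^sup>2) \<partial>lborel)"
    by simp
qed

definition w1 :: "real \<Rightarrow> real" where "w1 t = 1 / (1 + t\<^sup>2)"

lemma w1_measurable[measurable]: "w1 \<in> borel_measurable borel"
  unfolding w1_def[abs_def] by measurable

lemma w1_nonneg: "w1 t \<ge> 0" by (simp add: w1_def)

lemma nn_integral_w1: "(\<integral>\<^sup>+ t. ennreal (w1 t) \<partial>lborel) < \<infinity>"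
proof -
  define f where "f x = (if x \<in> {1..} then 1 / x\<^sup>2 else (0::real))" for x
  have fm[measurable]: "f \<in> borel_measurable borel" unfolding f_def[abs_def] by measurable
  have fpos: "f x \<ge> 0" for x by (simp add: f_def)
  have "((\<lambda>x. 1 / x ^ 2) has_integral 1 / (real (2 - 1) * 1 ^ (2 - 1))) {1::real..}"
    by (rule has_integral_inverse_power_to_inf) auto
  then have "(f has_integral 1) UNIV"
    unfolding f_def has_integral_restrict_UNIV by (simp add: power2_eq_square)
  then have f1: "(\<integral>\<^sup>+ x. ennreal (f x) \<partial>lborel) = 1"
    using nn_integral_has_integral_lborel[OF fm fpos] by simp
  have f2: "(\<integral>\<^sup>+ x. ennreal (f (0 + (-1) * x)) \<partial>lborel) = 1"
    using nn_integral_real_affine[of "\<lambda>x. ennreal (f x)" "-1" 0] f1 by simp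
  have "(\<integral>\<^sup>+ t. ennreal (w1 t) \<partial>lborel) \<le> (\<integral>\<^sup>+ t. indicator {-1..1} t + ennreal (f t) + ennreal (f (0 + (-1) * t)) \<partial>lborel)"
  proof (rule nn_integral_mono)
    fix t :: real
    show "ennreal (w1 t) \<le> indicator {-1..1} t + ennreal (f t) + ennreal (f (0 + (-1) * t))"
    proof (cases "t \<in> {-1..1}")
      case True
      have d: "1 + t\<^sup>2 > 0" by (simp add: add_pos_nonneg)
      have "w1 t \<le> 1" using d by (simp add: w1_def divide_le_eq)
      then show ?thesis using True by (simp add: add_increasing2)
    next
      case False
      then have "t > 1 \<or> t < -1" by auto
      then show ?thesis
      proof
        assume t: "t > 1"
        have "w1 t \<le> f t" using t by (simp add: w1_def f_def frac_le)
        then have 1: "ennreal (w1 t) \<le> ennreal (f t)" by (rule ennreal_leI)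
        have "ennreal (f t) \<le> indicator {-1..1} t + ennreal (f t) + ennreal (f (0 + (-1) * t))"
          by (rule add_increasing2[OF zero_le add_increasing[OF zero_le order_refl]])
        with 1 show ?thesis by (rule order_trans)
      next
        assume t: "t < -1"
        have "w1 t \<le> f (0 + (-1) * t)" using t by (simp add: w1_def f_def frac_le)
        then have 1: "ennreal (w1 t) \<le> ennreal (f (0 + (-1) * t))" by (rule ennreal_leI)
        have "ennreal (f (0 + (-1) * t)) \<le> indicator {-1..1} t + ennreal (f t) + ennreal (f (0 + (-1) * t))"
          by (rule add_increasing[OF zero_le order_refl])
        with 1 show ?thesis by (rule order_trans)
      qed
    qed
  qed
  also have "\<dots> = (\<integral>\<^sup>+ t. indicator {-1..1} t + ennreal (f t) \<partial>lborel) + (\<integral>\<^sup>+ t. ennreal (f (0 + (-1) * t)) \<partial>lborel)"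
    by (rule nn_integral_add) measurable
  also have "\<dots> < \<infinity>"
  proof -
    have eqA: "(\<integral>\<^sup>+ t. indicator {-1..1} t + ennreal (f t) \<partial>lborel) = (\<integral>\<^sup>+ t. indicator {-1..1::real} t \<partial>lborel) + (\<integral>\<^sup>+ t. ennreal (f t) \<partial>lborel)"
      by (rule nn_integral_add) measurable
    have i: "(\<integral>\<^sup>+ t. indicator {-1..1::real} t \<partial>lborel) = 2" by (subst nn_integral_indicator) auto
    show ?thesis unfolding eqA using f1 f2 i by simp
  qed
  finally show ?thesis .
qed

definition wd :: "real^'n \<Rightarrow> real" where "wd x = (\<Prod>k\<in>UNIV. w1 (x$k))"

lemma wd_measurable[measurable]: "wd \<in> borel_measurable borel"
  unfolding wd_def[abs_def] by measurable

lemma wd_nonneg: "wd x \<ge> 0" by (simp add: wd_def w1_nonneg prod_nonneg)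

lemma integrable_wd: "integrable lborel (wd :: real^'n \<Rightarrow> real)"
proof -
  interpret P: product_sigma_finite "\<lambda>_::'n. (lborel :: real measure)" by standard
  have "(\<integral>\<^sup>+ x. ennreal (wd (x::real^'n)) \<partial>lborel) = (\<integral>\<^sup>+ f. (\<Prod>k\<in>UNIV. ennreal (w1 (f k))) \<partial>PiM UNIV (\<lambda>_::'n. lborel))"
    by (subst lborel_vec) (simp add: nn_integral_distr wd_def prod_ennreal w1_nonneg)
  also have "\<dots> = (\<Prod>k\<in>(UNIV::'n set). \<integral>\<^sup>+ t. ennreal (w1 t) \<partial>lborel)"
    by (rule P.product_nn_integral_prod) auto
  also have "\<dots> < \<infinity>" using nn_integral_w1 by (simp add: power_less_top_ennreal)
  finally show ?thesis using wd_nonneg by (intro integrableI_nonneg) auto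
qed

lemma wd_bound: "(1 + norm x) ^ (2 * CARD('n)) * wd (x::real^'n) \<ge> 1"
proof -
  have "(\<Prod>k\<in>(UNIV::'n set). 1 + (x$k)\<^sup>2) \<le> (\<Prod>k\<in>(UNIV::'n set). (1 + norm x)\<^sup>2)"
  proof (rule prod_mono)
    fix k
    have "\<bar>x$k\<bar> \<le> norm x" by (rule component_le_norm_cart)
    then have "(x$k)\<^sup>2 \<le> (norm x)\<^sup>2" by (metis abs_ge_zero power2_abs power_mono)
    moreover have "(1 + norm x)\<^sup>2 = 1 + 2 * norm x + (norm x)\<^sup>2" by (simp add: power2_eq_square algebra_simps)
    moreover have "0 \<le> norm x" by simp
    moreover have "0 \<le> (x$k)\<^sup>2" by simp
    ultimately show "0 \<le> 1 + (x$k)\<^sup>2 \<and> 1 + (x$k)\<^sup>2 \<le> (1 + norm x)\<^sup>2"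
      by linarith
  qed
  also have "\<dots> = (1 + norm x) ^ (2 * CARD('n))" by (simp add: power_mult)
  finally have le: "(\<Prod>k\<in>(UNIV::'n set). 1 + (x$k)\<^sup>2) \<le> (1 + norm x) ^ (2 * CARD('n))" .
  have nz: "\<forall>a. 1 + (x$a)\<^sup>2 \<noteq> 0" by (smt (verit) zero_le_power2)
  have "wd x * (\<Prod>k\<in>(UNIV::'n set). 1 + (x$k)\<^sup>2) = 1"
    using nz by (simp add: wd_def w1_def prod.distrib[symmetric] prod_dividef)
  moreover have "wd x \<ge> 0" by (rule wd_nonneg)
  ultimately show ?thesis using le by (metis mult_left_mono mult.commute)
qed

lemma schwartz_cont: "schwartz f \<Longrightarrow> continuous_on UNIV f"
  unfolding schwartz_def
  by (metis continuous_at_imp_continuous_on differentiable_imp_continuous_within partials.simps(1))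

lemma schwartz_measurable: "schwartz f \<Longrightarrow> f \<in> borel_measurable borel"
  by (rule borel_measurable_continuous_onI) (rule schwartz_cont)

lemma schwartz_integrable:
  fixes f :: "real^'n \<Rightarrow> complex"
  assumes sf: "schwartz f" shows "integrable lborel f"
proof -
  obtain C where C: "\<And>x. (1 + norm x) ^ (2 * CARD('n)) * cmod (partials [] f x) \<le> C"
    using sf unfolding schwartz_def by blast
  have [measurable]: "f \<in> borel_measurable borel" by (rule schwartz_measurable[OF sf])
  show ?thesis
  proof (rule Bochner_Integration.integrable_bound[OF integrable_mult_right[OF integrable_wd, of C]])
    show "AE x in lborel. norm (f x) \<le> norm (C * wd x)"
    proof (rule AE_I2)
      fix x :: "real^'n"
      have "cmod (f x) \<le> cmod (f x) * ((1 + norm x) ^ (2 * CARD('n)) * wd x)"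
        using wd_bound[of x] by (simp add: mult_le_cancel_left1)
      also have "\<dots> = ((1 + norm x) ^ (2 * CARD('n)) * cmod (f x)) * wd x" by (simp add: mult_ac)
      also have "\<dots> \<le> C * wd x" using C[of x] wd_nonneg[of x] by (simp add: mult_right_mono)
      also have "\<dots> \<le> norm (C * wd x)" by simp
      finally show "norm (f x) \<le> norm (C * wd x)" by simp
    qed
  qed measurable
qed

lemma schwartz_bounded:
  assumes sf: "schwartz f" shows "\<exists>C. \<forall>x. cmod (f x) \<le> C"
proof -
  obtain C where C: "\<And>x. (1 + norm x) ^ 0 * cmod (partials [] f x) \<le> C"
    using sf unfolding schwartz_def by blast
  then show ?thesis by auto
qed

lemma schwartz_sq_integrable:
  fixes f :: "real^'n \<Rightarrow> complex"
  assumes sf: "schwartz f" shows "integrable lborel (\<lambda>x. (cmod (f x))\<^sup>2)"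
proof -
  obtain C where C: "\<And>x. cmod (f x) \<le> C" using schwartz_bounded[OF sf] by blast
  have [measurable]: "f \<in> borel_measurable borel" by (rule schwartz_measurable[OF sf])
  show ?thesis
  proof (rule Bochner_Integration.integrable_bound[OF integrable_mult_right[OF integrable_norm[OF schwartz_integrable[OF sf]], of C]])
    show "AE x in lborel. norm ((cmod (f x))\<^sup>2) \<le> norm (C * norm (f x))"
    proof (rule AE_I2)
      fix x
      have "(cmod (f x))\<^sup>2 = cmod (f x) * cmod (f x)" by (simp add: power2_eq_square)
      also have "\<dots> \<le> C * cmod (f x)" using C[of x] by (simp add: mult_right_mono)
      finally show "norm ((cmod (f x))\<^sup>2) \<le> norm (C * norm (f x))" by simp
    qed
  qed measurable
qed

lemma fourier_bound:
  fixes f :: "real^'n \<Rightarrow> complex"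
  assumes [measurable]: "f \<in> borel_measurable borel"
  shows "cmod (fourier f \<xi>) \<le> (\<integral>x. cmod (f x) \<partial>lborel)"
proof -
  have "cmod (fourier f \<xi>) \<le> (\<integral>x. norm (exp (\<i> * complex_of_real (2*pi*(\<xi> \<bullet> (- x)))) * f x) \<partial>lborel)"
    unfolding fourier_alt[OF assms] by (rule integral_norm_bound)
  then show ?thesis by (simp add: norm_mult)
qed

lemma sigma_finite_lebesgue: "sigma_finite_measure (lebesgue :: 'a::euclidean_space measure)"
proof
  obtain A :: "'a set set" where A: "countable A" "A \<subseteq> sets lborel" "\<Union>A = space lborel" "\<forall>a\<in>A. emeasure lborel a \<noteq> \<infinity>"
    using lborel.sigma_finite_countable by blast
  show "\<exists>A::'a set set. countable A \<and> A \<subseteq> sets lebesgue \<and> \<Union>A = space lebesgue \<and> (\<forall>a\<in>A. emeasure lebesgue a \<noteq> \<infinity>)"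
  proof (intro exI[of _ A] conjI)
    show "A \<subseteq> sets lebesgue" using A(2) by auto
    show "\<forall>a\<in>A. emeasure lebesgue a \<noteq> \<infinity>" using A(2,4) by auto
  qed (use A in auto)
qed

lemma measurable_vsum[measurable]: "(\<lambda>x::'a::euclidean_space^'k. \<Sum>i\<in>UNIV. x$i) \<in> borel_measurable borel"
  by (intro borel_measurable_continuous_onI linear_continuous_on bounded_linear_sum bounded_linear_vec_nth)

lemma measurable_ball_nth[measurable]: "Measurable.pred borel (\<lambda>x::'a::euclidean_space^'k. x $ i \<in> ball c R)"
proof -
  have "{x::'a^'k. x $ i \<in> ball c R} = (\<lambda>x. x$i) -` ball c R" by auto
  moreover have "open ((\<lambda>x::'a^'k. x$i) -` ball c R)" by (intro open_vimage_vec_nth) auto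
  ultimately show ?thesis unfolding pred_def by (simp add: borel_open)
qed

lemma ball_measure:
  assumes R: "R > 0"
  shows "emeasure lborel (ball (0::real^'n) R) \<le> ennreal ((2*R)^CARD('n))"
proof -
  interpret P: product_sigma_finite "\<lambda>_::'n. (lborel :: real measure)" by standard
  have "emeasure lborel (ball (0::real^'n) R) = (\<integral>\<^sup>+ x. indicator (ball (0::real^'n) R) x \<partial>lborel)"
    by (subst nn_integral_indicator) auto
  also have "\<dots> \<le> (\<integral>\<^sup>+ x. (\<Prod>k\<in>UNIV. indicator {-R..R} ((x::real^'n)$k)) \<partial>lborel)"
  proof (rule nn_integral_mono)
    fix x :: "real^'n"
    show "indicator (ball 0 R) x \<le> (\<Prod>k\<in>UNIV. indicator {-R..R} (x$k) :: ennreal)"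
    proof (cases "x \<in> ball 0 R")
      case True
      then have nx: "norm x < R" by simp
      have "x$k \<in> {-R..R}" for k
        using component_le_norm_cart[of x k] nx by (auto simp: abs_le_iff)
      then show ?thesis using True by simp
    qed simp
  qed
  also have "\<dots> = (\<integral>\<^sup>+ f. (\<Prod>k\<in>UNIV. indicator {-R..R} (f k)) \<partial>PiM UNIV (\<lambda>_::'n. lborel))"
    by (subst lborel_vec) (simp add: nn_integral_distr)
  also have "\<dots> = (\<Prod>k\<in>(UNIV::'n set). \<integral>\<^sup>+ t. indicator {-R..R} t \<partial>lborel)"
    by (rule P.product_nn_integral_prod) auto
  also have "\<dots> = (\<Prod>k\<in>(UNIV::'n set). ennreal (2*R))"
    using R by (subst nn_integral_indicator) auto
  also have "\<dots> = ennreal ((2*R)^CARD('n))"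
    using R by (simp add: prod_ennreal[symmetric] ennreal_power)
  finally show ?thesis .
qed

lemma vol_bound:
  fixes a :: "real^'n" and i0 :: "'k::finite"
  assumes e: "e > 0" and R: "R > 0"
  shows "(\<integral>\<^sup>+ \<xi>. ennreal ((\<Prod>i\<in>UNIV - {i0}. indicator (ball 0 R) (\<xi>$i)) * K e (a - (\<Sum>i\<in>UNIV. \<xi>$i))) \<partial>(lborel :: (real^'n^'k) measure))
     \<le> ennreal ((2*R)^(CARD('n) * (CARD('k) - 1)))"
proof -
  interpret P: product_sigma_finite "\<lambda>_::'k. (lborel :: (real^'n) measure)" by standard
  define I where "I = (UNIV::'k set) - {i0}"
  have U: "(UNIV::'k set) = insert i0 I" by (auto simp: I_def)
  have i0I: "i0 \<notin> I" by (simp add: I_def)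
  have finI: "finite I" by simp
  define Fn where "Fn f = ennreal ((\<Prod>i\<in>I. indicator (ball 0 R) (f i)) * K e (a - (\<Sum>i\<in>UNIV. f i)))" for f :: "'k \<Rightarrow> real^'n"
  have PU: "PiM UNIV (\<lambda>_::'k. (lborel :: (real^'n) measure)) = PiM (insert i0 I) (\<lambda>_. lborel)"
    by (rule arg_cong[where f="\<lambda>A. PiM A (\<lambda>_::'k. (lborel :: (real^'n) measure))"]) (rule U)
  have Fm: "Fn \<in> borel_measurable (PiM (insert i0 I) (\<lambda>_::'k. (lborel :: (real^'n) measure)))"
    unfolding Fn_def[abs_def] using U by measurable (auto simp: U[symmetric])
  have "(\<integral>\<^sup>+ \<xi>. ennreal ((\<Prod>i\<in>UNIV - {i0}. indicator (ball 0 R) (\<xi>$i)) * K e (a - (\<Sum>i\<in>UNIV. \<xi>$i))) \<partial>(lborel :: (real^'n^'k) measure))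
      = (\<integral>\<^sup>+ f. Fn f \<partial>PiM UNIV (\<lambda>_::'k. (lborel :: (real^'n) measure)))"
  proof -
    have mE: "(\<lambda>\<xi>::real^'n^'k. ennreal ((\<Prod>i\<in>UNIV - {i0}. indicator (ball 0 R) (\<xi>$i)) * K e (a - (\<Sum>i\<in>UNIV. \<xi>$i)))) \<in> borel_measurable borel"
      by measurable
    show ?thesis
      apply (subst lborel_vec)
      apply (subst nn_integral_distr)
        apply (rule borel_measurable_vec_lambda_PiM)
       apply (simp add: mE)
      apply (simp add: Fn_def[abs_def] I_def)
      done
  qed
  also have "\<dots> = (\<integral>\<^sup>+ f. Fn f \<partial>PiM (insert i0 I) (\<lambda>_::'k. (lborel :: (real^'n) measure)))"
    by (simp only: PU)
  also have "\<dots> = (\<integral>\<^sup>+ x. (\<integral>\<^sup>+ y. Fn (x(i0 := y)) \<partial>lborel) \<partial>PiM I (\<lambda>_::'k. (lborel :: (real^'n) measure)))"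
    by (rule P.product_nn_integral_insert[OF finI i0I Fm])
  also have "\<dots> = (\<integral>\<^sup>+ x. (\<Prod>i\<in>I. indicator (ball 0 R) (x i)) \<partial>PiM I (\<lambda>_::'k. (lborel :: (real^'n) measure)))"
  proof (rule nn_integral_cong)
    fix x :: "'k \<Rightarrow> real^'n"
    have eq: "Fn (x(i0 := y)) = ennreal (\<Prod>i\<in>I. indicator (ball 0 R) (x i)) * ennreal (K e ((a - (\<Sum>i\<in>I. x i)) - y))" for y
    proof -
      have "(\<Prod>i\<in>I. indicator (ball 0 R) ((x(i0 := y)) i)) = (\<Prod>i\<in>I. indicator (ball 0 R) (x i) :: real)"
        using i0I by (intro prod.cong) auto
      moreover have "(\<Sum>i\<in>UNIV. (x(i0 := y)) i) = y + (\<Sum>i\<in>I. x i)"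
        using i0I by (subst U) (auto simp: sum.insert_if intro!: sum.cong)
      ultimately have "Fn (x(i0 := y)) = ennreal ((\<Prod>i\<in>I. indicator (ball 0 R) (x i)) * K e ((a - (\<Sum>i\<in>I. x i)) - y))"
        unfolding Fn_def by (simp add: algebra_simps)
      also have "\<dots> = ennreal (\<Prod>i\<in>I. indicator (ball 0 R) (x i)) * ennreal (K e ((a - (\<Sum>i\<in>I. x i)) - y))"
        by (rule ennreal_mult') (simp add: prod_nonneg)
      finally show ?thesis .
    qed
    have "(\<integral>\<^sup>+ y. Fn (x(i0 := y)) \<partial>lborel) = ennreal (\<Prod>i\<in>I. indicator (ball 0 R) (x i)) * (\<integral>\<^sup>+ y. ennreal (K e ((a - (\<Sum>i\<in>I. x i)) - y)) \<partial>lborel)"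
      unfolding eq by (rule nn_integral_cmult) measurable
    also have "\<dots> = ennreal (\<Prod>i\<in>I. indicator (ball 0 R) (x i))"
      by (simp only: nn_integral_K_shift[OF e] mult_1_right)
    also have "\<dots> = (\<Prod>i\<in>I. indicator (ball 0 R) (x i))"
      by (simp add: prod_ennreal[symmetric] ennreal_indicator)
    finally show "(\<integral>\<^sup>+ y. Fn (x(i0 := y)) \<partial>lborel) = (\<Prod>i\<in>I. indicator (ball 0 R) (x i))" .
  qed
  also have "\<dots> = (\<Prod>i\<in>I. \<integral>\<^sup>+ t. indicator (ball (0::real^'n) R) t \<partial>lborel)"
    by (rule P.product_nn_integral_prod[OF finI]) (auto intro!: borel_measurable_indicator)
  also have "\<dots> = (\<Prod>i\<in>I. emeasure lborel (ball (0::real^'n) R))"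
    by (subst nn_integral_indicator) auto
  also have "\<dots> \<le> (\<Prod>i\<in>I. ennreal ((2*R)^CARD('n)))"
    by (rule prod_mono_ennreal) (rule ball_measure[OF R])
  also have "\<dots> = ennreal ((2*R)^(CARD('n) * (CARD('k) - 1)))"
  proof -
    have "card I = CARD('k) - 1" by (simp add: I_def card_Diff_singleton)
    then show ?thesis using R by (simp add: prod_ennreal[symmetric] ennreal_power power_mult)
  qed
  finally show ?thesis .
qed

lemma arith_id:
  fixes C s :: real and j D :: nat
  shows "(\<bar>C\<bar> * (2^j/2) powr (-s))\<^sup>2 * (2 * (2 * 2^j))^D = (\<bar>C\<bar> * 2 powr s * 2^D * 2 powr (- real j * (s - real D / 2)))\<^sup>2"
proof -
  have a: "(2::real)^j/2 = 2 powr (real j - 1)"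
    by (simp add: powr_diff powr_realpow)
  have b: "((2::real) powr (real j - 1)) powr (-s) = 2 powr ((real j - 1) * (-s))"
    by (simp add: powr_powr)
  have c: "(2 * (2 * (2::real)^j))^D = 2 powr ((real j + 2) * real D)"
  proof -
    have "(2 * (2 * (2::real)^j)) = 2 powr (real j + 2)"
      by (simp add: powr_add powr_realpow)
    moreover have "(2 powr (real j + 2))^D = (2 powr (real j + 2)) powr real D"
      by (rule powr_realpow[symmetric]) simp
    moreover have "((2::real) powr (real j + 2)) powr real D = 2 powr ((real j + 2) * real D)"
      by (rule powr_powr)
    ultimately show ?thesis by simp
  qed
  have d: "(2::real)^D = 2 powr real D" by (simp add: powr_realpow)
  have sq: "\<And>x::real. (2 powr x)\<^sup>2 = 2 powr (2 * x)"
    by (simp add: power2_eq_square powr_add[symmetric])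
  have "(\<bar>C\<bar> * (2^j/2) powr (-s))\<^sup>2 * (2 * (2 * 2^j))^D
      = C\<^sup>2 * (2 powr (2 * ((real j - 1) * (-s))) * 2 powr ((real j + 2) * real D))"
    unfolding a b c by (simp add: power_mult_distrib sq)
  also have "\<dots> = C\<^sup>2 * 2 powr (2 * ((real j - 1) * (-s)) + (real j + 2) * real D)"
    by (simp only: powr_add)
  also have "2 * ((real j - 1) * (-s)) + (real j + 2) * real D = 2 * s + 2 * real D + 2 * (- real j * (s - real D / 2))"
    by (simp add: algebra_simps)
  also have "C\<^sup>2 * 2 powr (2 * s + 2 * real D + 2 * (- real j * (s - real D / 2)))
      = (\<bar>C\<bar> * 2 powr s * 2^D * 2 powr (- real j * (s - real D / 2)))\<^sup>2"
  proof -
    define x where "x = - real j * (s - real D / 2)"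
    have "(\<bar>C\<bar> * 2 powr s * 2 powr real D * 2 powr x)\<^sup>2 = C\<^sup>2 * 2 powr (2 * s) * 2 powr (2 * real D) * 2 powr (2 * x)"
      by (simp only: power_mult_distrib sq power2_abs)
    moreover have "(2::real) powr (2 * s + 2 * real D + 2 * x) = 2 powr (2 * s) * 2 powr (2 * real D) * 2 powr (2 * x)"
      by (simp only: powr_add)
    ultimately show ?thesis unfolding d x_def[symmetric] by (simp only: mult.assoc)
  qed
  finally show ?thesis .
qed


theorem lemma2p2:
  fixes s C :: real
  assumes "CARD('k::finite) \<ge> 2" and "s > 0"
  shows "\<exists>C'. \<forall>(j::nat) (\<mm>::real^('n::finite)^'k \<Rightarrow> complex) (F::'k \<Rightarrow> real^'n \<Rightarrow> complex).
      \<mm> \<in> borel_measurable lebesgue \<longrightarrow>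
      (\<forall>\<xi>. cmod (\<mm> \<xi>) \<le> C * (1 + norm \<xi>) powr (- s)) \<longrightarrow>
      closure {\<xi>. \<mm> \<xi> \<noteq> 0} \<subseteq> annulus (2 ^ j) \<longrightarrow>
      (\<forall>i. schwartz (F i)) \<longrightarrow>
      (\<integral>\<^sup>+ x. ennreal ((cmod (multop \<mm> F x))\<^sup>2) \<partial>lebesgue)
        \<le> ennreal ((C' * 2 powr (- real j * (s - (real CARD('k) - 1) * real CARD('n) / 2))
                     * (\<Prod>i\<in>UNIV. l2norm (F i)))\<^sup>2)"
proof -
  define D where "D = CARD('n) * (CARD('k) - 1)"
  have Dr: "(real CARD('k) - 1) * real CARD('n) / 2 = real D / 2"
    using assms(1) by (simp add: D_def of_nat_diff)
  define C' where "C' = \<bar>C\<bar> * 2 powr s * 2^D"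
  show ?thesis unfolding Dr
  proof (intro exI[of _ C'] allI impI)
    fix j :: nat and m :: "real^'n^'k \<Rightarrow> complex" and F :: "'k \<Rightarrow> real^'n \<Rightarrow> complex"
    assume mm[measurable]: "m \<in> borel_measurable lebesgue"
      and mb: "\<forall>\<xi>. cmod (m \<xi>) \<le> C * (1 + norm \<xi>) powr (- s)"
      and supp: "closure {\<xi>. m \<xi> \<noteq> 0} \<subseteq> annulus (2 ^ j)"
      and sch: "\<forall>i. schwartz (F i)"
    have Fm[measurable]: "F i \<in> borel_measurable borel" for i using sch schwartz_measurable by blast
    have Fi: "integrable lborel (F i)" for i using sch schwartz_integrable by blast
    have F2: "integrable lborel (\<lambda>x. (cmod (F i x))\<^sup>2)" for i using sch schwartz_sq_integrable by blast
    have fFm[measurable]: "fourier (F i) \<in> borel_measurable borel" for i by (rule measurable_fourier[OF Fm])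
    define R :: real where "R = 2 * 2^j"
    have R: "R > 0" by (simp add: R_def)
    define Mb where "Mb = \<bar>C\<bar> * (2^j/2) powr (-s)"
    have Mbpos: "Mb \<ge> 0" by (simp add: Mb_def)
    obtain i0 :: 'k where True by blast
    have msup: "norm \<xi> < R \<and> cmod (m \<xi>) \<le> Mb" if "m \<xi> \<noteq> 0" for \<xi>
    proof -
      have "\<xi> \<in> {\<xi>. m \<xi> \<noteq> 0}" using that by simp
      then have "\<xi> \<in> closure {\<xi>. m \<xi> \<noteq> 0}" by (rule subsetD[OF closure_subset])
      then have "\<xi> \<in> annulus (2^j)" by (rule subsetD[OF supp])
      then have a1: "2^j/2 < norm \<xi>" and a2: "norm \<xi> < 2 * 2^j" by (auto simp: annulus_def)
      have "cmod (m \<xi>) \<le> C * (1 + norm \<xi>) powr (- s)" using mb by blast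
      also have "\<dots> \<le> \<bar>C\<bar> * (1 + norm \<xi>) powr (- s)" by (intro mult_right_mono) auto
      also have "\<dots> \<le> \<bar>C\<bar> * (2^j/2) powr (- s)"
        using a1 assms(2) by (intro mult_left_mono powr_mono2') auto
      finally show ?thesis using a2 by (simp add: Mb_def R_def)
    qed
    have m2bound: "(cmod (m \<xi>))\<^sup>2 \<le> Mb\<^sup>2 * (\<Prod>i\<in>UNIV - {i0}. indicator (ball 0 R) (\<xi>$i))" for \<xi>
    proof (cases "m \<xi> = 0")
      case True then show ?thesis by (simp add: prod_nonneg)
    next
      case False
      with msup have n: "norm \<xi> < R" and c: "cmod (m \<xi>) \<le> Mb" by auto
      have "\<xi>$i \<in> ball 0 R" for i using Finite_Cartesian_Product.norm_nth_le[of \<xi> i] n by simp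
      then have "(\<Prod>i\<in>UNIV - {i0}. indicator (ball 0 R) (\<xi>$i) :: real) = 1" by simp
      then show ?thesis using c by (simp add: power_mono)
    qed
    have mabs: "cmod (m \<xi>) \<le> Mb * indicator (ball 0 R) \<xi>" for \<xi>
      using msup[of \<xi>] Mbpos by (cases "m \<xi> = 0") auto
    define P where "P \<xi> = (\<Prod>i\<in>UNIV. fourier (F i) (\<xi>$i))" for \<xi> :: "real^'n^'k"
    have Pm[measurable]: "P \<in> borel_measurable borel" unfolding P_def[abs_def] by measurable
    define B where "B = (\<Prod>i\<in>UNIV. \<integral>x. cmod (F i x) \<partial>lborel)"
    have Pb: "cmod (P \<xi>) \<le> B" for \<xi>
      unfolding P_def B_def prod_norm[symmetric] by (intro prod_mono conjI fourier_bound[OF Fm]) auto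
    define \<psi> where "\<psi> \<xi> = m \<xi> * P \<xi>" for \<xi>
    have Pml[measurable]: "P \<in> borel_measurable lebesgue" by (rule measurable_completion) simp
    have \<psi>m[measurable]: "\<psi> \<in> borel_measurable lebesgue" unfolding \<psi>_def[abs_def] by measurable
    have ballfin: "emeasure lebesgue (ball (0::real^'n^'k) R) < \<infinity>"
      using emeasure_bounded_finite[of "ball (0::real^'n^'k) R"] by simp
    have \<psi>int: "integrable lebesgue \<psi>"
    proof (rule Bochner_Integration.integrable_bound[OF integrable_mult_right[OF integrable_real_indicator[OF _ ballfin], of "Mb * B"]])
      show "ball 0 R \<in> sets lebesgue" by simp
      show "AE x in lebesgue. norm (\<psi> x) \<le> norm (Mb * B * indicator (ball 0 R) x)"
      proof (rule AE_I2)
        fix x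
        have "norm (\<psi> x) = cmod (m x) * cmod (P x)" by (simp add: \<psi>_def norm_mult)
        also have "\<dots> \<le> (Mb * indicator (ball 0 R) x) * B"
          using mabs[of x] Pb[of x] Mbpos by (intro mult_mono) auto
        also have "\<dots> \<le> norm (Mb * B * indicator (ball 0 R) x)" by (simp add: mult_ac)
        finally show "norm (\<psi> x) \<le> norm (Mb * B * indicator (ball 0 R) x)" .
      qed
    qed simp
    define S where "S \<xi> = (\<Sum>i\<in>UNIV. \<xi>$i)" for \<xi> :: "real^'n^'k"
    have Sm[measurable]: "S \<in> lebesgue \<rightarrow>\<^sub>M borel" unfolding S_def[abs_def] by (rule measurable_completion) simp
    have Sb[measurable]: "S \<in> borel_measurable borel" unfolding S_def[abs_def] by simp
    define T where "T x = (\<integral>\<xi>. exp (\<i> * complex_of_real (2*pi*(x \<bullet> S \<xi>))) * \<psi> \<xi> \<partial>lebesgue)" for x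
    have Teq: "multop m F x = T x" for x
      unfolding multop_def T_def S_def \<psi>_def P_def
      by (rule Bochner_Integration.integral_cong) (auto simp: mult_ac)
    interpret Leb: sigma_finite_measure "lebesgue :: (real^'n^'k) measure" by (rule sigma_finite_lebesgue)
    have Tm[measurable]: "T \<in> borel_measurable borel"
      unfolding T_def by (rule Leb.borel_measurable_lebesgue_integral) (simp add: split_beta')
    define A where "A = ennreal (Mb\<^sup>2 * (2*R)^D)"
    have main: "(\<integral>\<^sup>+ x. ennreal (G e x) * ennreal ((cmod (T x))\<^sup>2) \<partial>lborel) \<le> A * (\<integral>\<^sup>+ a. ennreal ((cmod (P a))\<^sup>2) \<partial>lebesgue)"
      if e: "e > 0" for e
    proof -
      have "(\<integral>\<^sup>+ x. ennreal (G e x) * ennreal ((cmod (T x))\<^sup>2) \<partial>lborel) = (\<integral>\<^sup>+ x. ennreal (G e x * (cmod (T x))\<^sup>2) \<partial>lborel)"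
        by (simp add: ennreal_mult' G_nonneg)
      also have "\<dots> \<le> (\<integral>\<^sup>+z. ennreal (cmod (\<psi> (fst z)) * cmod (\<psi> (snd z)) * K e (S (fst z) - S (snd z))) \<partial>(lebesgue \<Otimes>\<^sub>M lebesgue))"
        unfolding T_def by (rule core[OF sigma_finite_lebesgue \<psi>int Sm e])
      also have "\<dots> \<le> A * (\<integral>\<^sup>+ a. ennreal ((cmod (P a))\<^sup>2) \<partial>lebesgue)"
      proof (rule split_bound[OF sigma_finite_lebesgue, where q="\<lambda>b. (cmod (m b))\<^sup>2" and W="\<lambda>a b. K e (S a - S b)" and g="\<lambda>a b. cmod (\<psi> a) * cmod (\<psi> b)"])
        show "\<And>a b. K e (S a - S b) = K e (S b - S a)" by (metis K_even minus_diff_eq)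
        show "\<And>a b. K e (S a - S b) \<ge> 0" using K_nonneg[OF e] by blast
        show "\<And>a b. cmod (\<psi> a) * cmod (\<psi> b) \<le> (cmod (P a))\<^sup>2 * (cmod (m b))\<^sup>2 / 2 + (cmod (m a))\<^sup>2 * (cmod (P b))\<^sup>2 / 2"
        proof -
          fix a b
          define u where "u = cmod (P a) * cmod (m b)"
          define v where "v = cmod (m a) * cmod (P b)"
          have "0 \<le> (u - v)\<^sup>2" by simp
          then have "u * v \<le> u\<^sup>2 / 2 + v\<^sup>2 / 2" by (simp add: power2_eq_square algebra_simps)
          moreover have "cmod (\<psi> a) * cmod (\<psi> b) = u * v" by (simp add: u_def v_def \<psi>_def norm_mult mult_ac)
          moreover have "u\<^sup>2 = (cmod (P a))\<^sup>2 * (cmod (m b))\<^sup>2" "v\<^sup>2 = (cmod (m a))\<^sup>2 * (cmod (P b))\<^sup>2"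
            by (simp_all add: u_def v_def power_mult_distrib)
          ultimately show "cmod (\<psi> a) * cmod (\<psi> b) \<le> (cmod (P a))\<^sup>2 * (cmod (m b))\<^sup>2 / 2 + (cmod (m a))\<^sup>2 * (cmod (P b))\<^sup>2 / 2"
            by simp
        qed
        fix a :: "real^'n^'k"
        have "(\<integral>\<^sup>+ b. ennreal ((cmod (m b))\<^sup>2 * K e (S a - S b)) \<partial>lebesgue)
            \<le> (\<integral>\<^sup>+ b. ennreal (Mb\<^sup>2) * ennreal ((\<Prod>i\<in>UNIV - {i0}. indicator (ball 0 R) (b$i)) * K e (S a - S b)) \<partial>lebesgue)"
        proof (rule nn_integral_mono)
          fix b
          have "(cmod (m b))\<^sup>2 * K e (S a - S b) \<le> Mb\<^sup>2 * (\<Prod>i\<in>UNIV - {i0}. indicator (ball 0 R) (b$i)) * K e (S a - S b)"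
            using m2bound[of b] K_nonneg[OF e] by (intro mult_right_mono) auto
          then show "ennreal ((cmod (m b))\<^sup>2 * K e (S a - S b)) \<le> ennreal (Mb\<^sup>2) * ennreal ((\<Prod>i\<in>UNIV - {i0}. indicator (ball 0 R) (b$i)) * K e (S a - S b))"
            by (simp add: ennreal_mult'[symmetric] mult.assoc ennreal_leI)
        qed
        also have "\<dots> = ennreal (Mb\<^sup>2) * (\<integral>\<^sup>+ b. ennreal ((\<Prod>i\<in>UNIV - {i0}. indicator (ball 0 R) (b$i)) * K e (S a - S b)) \<partial>lebesgue)"
          by (rule nn_integral_cmult) (rule measurable_completion, measurable)
        also have "(\<integral>\<^sup>+ b. ennreal ((\<Prod>i\<in>UNIV - {i0}. indicator (ball 0 R) (b$i)) * K e (S a - S b)) \<partial>lebesgue)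
            = (\<integral>\<^sup>+ b. ennreal ((\<Prod>i\<in>UNIV - {i0}. indicator (ball 0 R) (b$i)) * K e (S a - (\<Sum>i\<in>UNIV. b$i))) \<partial>lborel)"
          by (simp add: nn_integral_completion S_def)
        also have "\<dots> \<le> ennreal ((2*R)^(CARD('n) * (CARD('k) - 1)))"
          by (rule vol_bound[OF e R])
        finally show "(\<integral>\<^sup>+ b. ennreal ((cmod (m b))\<^sup>2 * K e (S a - S b)) \<partial>lebesgue) \<le> A"
          unfolding A_def D_def using Mbpos by (simp add: ennreal_mult'[symmetric] mult_left_mono)
      qed (auto simp: K_nonneg[OF e])
      finally show ?thesis .
    qed
    have Tlim: "(\<integral>\<^sup>+ x. ennreal ((cmod (T x))\<^sup>2) \<partial>lborel) \<le> A * (\<integral>\<^sup>+ a. ennreal ((cmod (P a))\<^sup>2) \<partial>lebesgue)"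
      by (rule reg_limit) (auto intro: main)
    interpret PK: product_sigma_finite "\<lambda>_::'k. (lborel :: (real^'n) measure)" by standard
    have Pint: "(\<integral>\<^sup>+ a. ennreal ((cmod (P a))\<^sup>2) \<partial>lebesgue) \<le> ennreal (\<Prod>i\<in>UNIV. \<integral>x. (cmod (F i x))\<^sup>2 \<partial>lborel)"
    proof -
      have mP2: "(\<lambda>a. ennreal ((cmod (P a))\<^sup>2)) \<in> borel_measurable borel" by measurable
      have "(\<integral>\<^sup>+ a. ennreal ((cmod (P a))\<^sup>2) \<partial>lebesgue) = (\<integral>\<^sup>+ a. ennreal ((cmod (P a))\<^sup>2) \<partial>lborel)"
        by (simp add: nn_integral_completion)
      also have "\<dots> = (\<integral>\<^sup>+ f. ennreal ((cmod (P (vec_lambda f)))\<^sup>2) \<partial>PiM UNIV (\<lambda>_::'k. (lborel :: (real^'n) measure)))"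
        apply (subst lborel_vec)
        apply (subst nn_integral_distr)
          apply (rule borel_measurable_vec_lambda_PiM)
         apply (simp add: mP2)
        apply simp
        done
      also have "\<dots> = (\<integral>\<^sup>+ f. (\<Prod>i\<in>UNIV. ennreal ((cmod (fourier (F i) (f i)))\<^sup>2)) \<partial>PiM UNIV (\<lambda>_::'k. (lborel :: (real^'n) measure)))"
        by (simp add: P_def prod_norm[symmetric] prod_power_distrib prod_ennreal)
      also have "\<dots> = (\<Prod>i\<in>UNIV. \<integral>\<^sup>+ x. ennreal ((cmod (fourier (F i) x))\<^sup>2) \<partial>lborel)"
        by (rule PK.product_nn_integral_prod) auto
      also have "\<dots> \<le> (\<Prod>i\<in>UNIV. \<integral>\<^sup>+ x. ennreal ((cmod (F i x))\<^sup>2) \<partial>lborel)"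
        by (rule prod_mono_ennreal) (rule plancherel_le[OF Fm Fi])
      also have "\<dots> = (\<Prod>i\<in>UNIV. ennreal (\<integral>x. (cmod (F i x))\<^sup>2 \<partial>lborel))"
        using F2 by (intro prod.cong refl nn_integral_eq_integral) auto
      also have "\<dots> = ennreal (\<Prod>i\<in>UNIV. \<integral>x. (cmod (F i x))\<^sup>2 \<partial>lborel)"
        by (simp add: prod_ennreal)
      finally show ?thesis .
    qed
    have l2: "(\<Prod>i\<in>UNIV. l2norm (F i))\<^sup>2 = (\<Prod>i\<in>UNIV. \<integral>x. (cmod (F i x))\<^sup>2 \<partial>lborel)"
    proof -
      have "(l2norm (F i))\<^sup>2 = (\<integral>x. (cmod (F i x))\<^sup>2 \<partial>lborel)" for i
      proof -
        have "(\<integral>x. (cmod (F i x))\<^sup>2 \<partial>lebesgue) = (\<integral>x. (cmod (F i x))\<^sup>2 \<partial>lborel)"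
          by (rule integral_completion) measurable
        then show ?thesis unfolding l2norm_def by simp
      qed
      then show ?thesis by (simp add: prod_power_distrib)
    qed
    have "(\<integral>\<^sup>+ x. ennreal ((cmod (multop m F x))\<^sup>2) \<partial>lebesgue) = (\<integral>\<^sup>+ x. ennreal ((cmod (T x))\<^sup>2) \<partial>lborel)"
      by (simp add: Teq nn_integral_completion)
    also have "\<dots> \<le> A * ennreal (\<Prod>i\<in>UNIV. \<integral>x. (cmod (F i x))\<^sup>2 \<partial>lborel)"
      using Tlim Pint by (meson mult_left_mono order_trans zero_le)
    also have "\<dots> = ennreal (Mb\<^sup>2 * (2*R)^D * (\<Prod>i\<in>UNIV. \<integral>x. (cmod (F i x))\<^sup>2 \<partial>lborel))"
      unfolding A_def using R by (simp add: ennreal_mult'[symmetric])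
    also have "Mb\<^sup>2 * (2*R)^D = (C' * 2 powr (- real j * (s - real D / 2)))\<^sup>2"
      unfolding Mb_def R_def C'_def by (rule arith_id)
    finally show "(\<integral>\<^sup>+ x. ennreal ((cmod (multop m F x))\<^sup>2) \<partial>lebesgue)
        \<le> ennreal ((C' * 2 powr (- real j * (s - real D / 2)) * (\<Prod>i\<in>UNIV. l2norm (F i)))\<^sup>2)"
      by (simp add: power_mult_distrib l2)
  qed
qed

end
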